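(* Let $n$ be a positive integer. For any finite simple graph $H$, the strong product $K_n \boxtimes H$ is well-dominated if and only if $H$ is well-dominated.
   Context: A set $D$ of vertices of a graph is dominating if every vertex is in $D$ or adjacent to a vertex of $D$. A graph is well-dominated if every minimal (with respect to inclusion) dominating set is a minimum dominating set. The strong product $G\boxtimes H$ has vertex set $V(G)\times V(H)$, with distinct $(g_1,h_1)$ and $(g_2,h_2)$ adjacent iff ($g_1=g_2$ and $h_1h_2\in E(H)$), or ($h_1=h_2$ and $g_1g_2\in E(G)$), or ($g_1g_2\in E(G)$ and $h_1h_2\in E(H)$). *)

theory Defs
  imports Main
begin

definition simple_graph :: "'a set \<Rightarrow> ('a \<Rightarrow> 'a \<Rightarrow> bool) \<Rightarrow> bool" where
  "simple_graph V E \<longleftrightarrow> finite V \<and> (\<forall>x y. E x y \<longrightarrow> x \<in> V \<and> y \<in> V)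
     \<and> (\<forall>x y. E x y \<longrightarrow> E y x) \<and> (\<forall>x. \<not> E x x)"

definition dominating :: "'a set \<Rightarrow> ('a \<Rightarrow> 'a \<Rightarrow> bool) \<Rightarrow> 'a set \<Rightarrow> bool" where
  "dominating V E D \<longleftrightarrow> D \<subseteq> V \<and> (\<forall>v\<in>V. v \<in> D \<or> (\<exists>u\<in>D. E u v))"

definition minimal_dominating :: "'a set \<Rightarrow> ('a \<Rightarrow> 'a \<Rightarrow> bool) \<Rightarrow> 'a set \<Rightarrow> bool" where
  "minimal_dominating V E D \<longleftrightarrow> dominating V E D \<and> (\<forall>D'. D' \<subset> D \<longrightarrow> \<not> dominating V E D')"

definition minimum_dominating :: "'a set \<Rightarrow> ('a \<Rightarrow> 'a \<Rightarrow> bool) \<Rightarrow> 'a set \<Rightarrow> bool" where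
  "minimum_dominating V E D \<longleftrightarrow> dominating V E D \<and> (\<forall>D'. dominating V E D' \<longrightarrow> card D \<le> card D')"

definition well_dominated :: "'a set \<Rightarrow> ('a \<Rightarrow> 'a \<Rightarrow> bool) \<Rightarrow> bool" where
  "well_dominated V E \<longleftrightarrow> (\<forall>D. minimal_dominating V E D \<longrightarrow> minimum_dominating V E D)"

definition strong_prod_edges ::
  "('a \<Rightarrow> 'a \<Rightarrow> bool) \<Rightarrow> ('b \<Rightarrow> 'b \<Rightarrow> bool) \<Rightarrow> 'a \<times> 'b \<Rightarrow> 'a \<times> 'b \<Rightarrow> bool" where
  "strong_prod_edges E1 E2 p q \<longleftrightarrow> p \<noteq> q \<and>
     ((fst p = fst q \<and> E2 (snd p) (snd q)) \<or>
      (snd p = snd q \<and> E1 (fst p) (fst q)) \<or>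
      (E1 (fst p) (fst q) \<and> E2 (snd p) (snd q)))"

definition complete_vertices :: "nat \<Rightarrow> nat set" where
  "complete_vertices n = {0..<n}"

definition complete_edges :: "nat \<Rightarrow> nat \<Rightarrow> nat \<Rightarrow> bool" where
  "complete_edges n i j \<longleftrightarrow> i < n \<and> j < n \<and> i \<noteq> j"

end

theory Submission
  imports Defs
begin

lemma dom_iff:
  assumes n: "n > 0" and g: "simple_graph V E"
  shows "dominating (complete_vertices n \<times> V) (strong_prod_edges (complete_edges n) E) D
     \<longleftrightarrow> D \<subseteq> complete_vertices n \<times> V \<and> dominating V E (snd ` D)"
proof
  assume d: "dominating (complete_vertices n \<times> V) (strong_prod_edges (complete_edges n) E) D"
  hence sub: "D \<subseteq> complete_vertices n \<times> V" by (simp add: dominating_def)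
  have "\<forall>w\<in>V. w \<in> snd ` D \<or> (\<exists>u\<in>snd ` D. E u w)"
  proof
    fix w assume w: "w \<in> V"
    hence "(0, w) \<in> complete_vertices n \<times> V" using n by (simp add: complete_vertices_def)
    then have "(0,w) \<in> D \<or> (\<exists>p\<in>D. strong_prod_edges (complete_edges n) E p (0,w))"
      using d unfolding dominating_def by blast
    then show "w \<in> snd ` D \<or> (\<exists>u\<in>snd ` D. E u w)"
    proof
      assume "(0,w) \<in> D" thus ?thesis by force
    next
      assume "\<exists>p\<in>D. strong_prod_edges (complete_edges n) E p (0,w)"
      then obtain p where p: "p \<in> D" "strong_prod_edges (complete_edges n) E p (0,w)" by blast
      hence "snd p = w \<or> E (snd p) w" by (auto simp: strong_prod_edges_def)
      thus ?thesis using p(1) by force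
    qed
  qed
  moreover have "snd ` D \<subseteq> V" using sub by auto
  ultimately show "D \<subseteq> complete_vertices n \<times> V \<and> dominating V E (snd ` D)"
    using sub by (simp add: dominating_def)
next
  assume a: "D \<subseteq> complete_vertices n \<times> V \<and> dominating V E (snd ` D)"
  have "\<forall>q\<in>complete_vertices n \<times> V. q \<in> D \<or> (\<exists>p\<in>D. strong_prod_edges (complete_edges n) E p q)"
  proof
    fix q assume q: "q \<in> complete_vertices n \<times> V"
    obtain j w where qjw: "q = (j,w)" by (cases q)
    with q have j: "j < n" and w: "w \<in> V" by (auto simp: complete_vertices_def)
    from a w have "w \<in> snd ` D \<or> (\<exists>u\<in>snd ` D. E u w)" by (simp add: dominating_def)
    then show "q \<in> D \<or> (\<exists>p\<in>D. strong_prod_edges (complete_edges n) E p q)"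
    proof
      assume "w \<in> snd ` D"
      then obtain i where i: "(i,w) \<in> D" by force
      hence "i < n" using a by (auto simp: complete_vertices_def)
      show ?thesis
      proof (cases "i = j")
        case True thus ?thesis using i qjw by simp
      next
        case False
        hence "strong_prod_edges (complete_edges n) E (i,w) q"
          using \<open>i < n\<close> j qjw by (simp add: strong_prod_edges_def complete_edges_def)
        thus ?thesis using i by blast
      qed
    next
      assume "\<exists>u\<in>snd ` D. E u w"
      then obtain i u where iu: "(i,u) \<in> D" "E u w" by force
      hence "i < n" using a by (auto simp: complete_vertices_def)
      have "u \<noteq> w" using g iu(2) unfolding simple_graph_def by metis
      hence "strong_prod_edges (complete_edges n) E (i,u) q"
        using \<open>i < n\<close> j qjw iu(2) by (auto simp: strong_prod_edges_def complete_edges_def)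
      thus ?thesis using iu by blast
    qed
  qed
  thus "dominating (complete_vertices n \<times> V) (strong_prod_edges (complete_edges n) E) D"
    using a by (simp add: dominating_def)
qed

lemma min_proj:
  assumes n: "n > 0" and g: "simple_graph V E"
    and m: "minimal_dominating (complete_vertices n \<times> V) (strong_prod_edges (complete_edges n) E) D"
  shows "inj_on snd D \<and> minimal_dominating V E (snd ` D)"
proof -
  have d: "D \<subseteq> complete_vertices n \<times> V" "dominating V E (snd ` D)"
    using m dom_iff[OF n g] unfolding minimal_dominating_def by auto
  have inj: "inj_on snd D"
  proof (rule inj_onI, rule ccontr)
    fix p q assume pq: "p \<in> D" "q \<in> D" "snd p = snd q" "p \<noteq> q"
    have "snd ` (D - {q}) = snd ` D"
    proof
      show "snd ` D \<subseteq> snd ` (D - {q})"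
      proof
        fix x assume "x \<in> snd ` D"
        then obtain r where r: "r \<in> D" "x = snd r" by blast
        show "x \<in> snd ` (D - {q})"
        proof (cases "r = q")
          case True thus ?thesis using pq r by (metis DiffI image_eqI singletonD)
        next
          case False thus ?thesis using r by blast
        qed
      qed
    qed blast
    moreover have "D - {q} \<subseteq> complete_vertices n \<times> V" using d by auto
    ultimately have "dominating (complete_vertices n \<times> V) (strong_prod_edges (complete_edges n) E) (D - {q})"
      using dom_iff[OF n g] d by simp
    moreover have "D - {q} \<subset> D" using pq by auto
    ultimately show False using m unfolding minimal_dominating_def by blast
  qed
  have "\<forall>S'. S' \<subset> snd ` D \<longrightarrow> \<not> dominating V E S'"
  proof (intro allI impI notI)
    fix S' assume s: "S' \<subset> snd ` D" and ds: "dominating V E S'"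
    define D' where "D' = {p\<in>D. snd p \<in> S'}"
    have "snd ` D' = S'" using s unfolding D'_def by blast
    moreover have "D' \<subseteq> complete_vertices n \<times> V" using d unfolding D'_def by auto
    ultimately have "dominating (complete_vertices n \<times> V) (strong_prod_edges (complete_edges n) E) D'"
      using dom_iff[OF n g] ds by simp
    moreover have "D' \<subset> D" using s unfolding D'_def by blast
    ultimately show False using m unfolding minimal_dominating_def by blast
  qed
  thus ?thesis using inj d unfolding minimal_dominating_def by blast
qed

lemma min_lift:
  assumes n: "n > 0" and g: "simple_graph V E"
    and m: "minimal_dominating V E S"
  shows "minimal_dominating (complete_vertices n \<times> V) (strong_prod_edges (complete_edges n) E) ({0} \<times> S)"
proof -
  have sv: "S \<subseteq> V" using m unfolding minimal_dominating_def dominating_def by blast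
  have sub: "{0} \<times> S \<subseteq> complete_vertices n \<times> V" using sv n by (auto simp: complete_vertices_def)
  have im: "snd ` ({0} \<times> S) = S" by force
  have dom: "dominating (complete_vertices n \<times> V) (strong_prod_edges (complete_edges n) E) ({0} \<times> S)"
    using dom_iff[OF n g] sub im m unfolding minimal_dominating_def by simp
  have "\<forall>D'. D' \<subset> {0} \<times> S \<longrightarrow> \<not> dominating (complete_vertices n \<times> V) (strong_prod_edges (complete_edges n) E) D'"
  proof (intro allI impI notI)
    fix D' assume s: "D' \<subset> {0} \<times> S"
      and dd: "dominating (complete_vertices n \<times> V) (strong_prod_edges (complete_edges n) E) D'"
    have "snd ` D' \<subseteq> S" using s by auto
    moreover have "snd ` D' \<noteq> S"
    proof
      assume e: "snd ` D' = S"
      have "{0} \<times> S \<subseteq> D'"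
      proof
        fix x assume "x \<in> {0::nat} \<times> S"
        then obtain y where x: "x = (0,y)" "y \<in> S" by auto
        then obtain r where "r \<in> D'" "snd r = y" using e by force
        moreover hence "fst r = 0" using s by auto
        ultimately show "x \<in> D'" using x by (metis prod.collapse)
      qed
      thus False using s by blast
    qed
    ultimately have "snd ` D' \<subset> S" by blast
    moreover have "dominating V E (snd ` D')" using dd dom_iff[OF n g] by simp
    ultimately show False using m unfolding minimal_dominating_def by blast
  qed
  thus ?thesis using dom unfolding minimal_dominating_def by blast
qed

theorem theorem4:
  fixes n :: nat and V :: "'a set" and E :: "'a \<Rightarrow> 'a \<Rightarrow> bool"
  assumes "n > 0" and "simple_graph V E"
  shows "well_dominated (complete_vertices n \<times> V) (strong_prod_edges (complete_edges n) E)
         \<longleftrightarrow> well_dominated V E"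
proof -
  note n = assms(1) and g = assms(2)
  have fin: "finite (complete_vertices n \<times> V)"
    using g by (simp add: simple_graph_def complete_vertices_def)
  have finV: "finite V" using g by (simp add: simple_graph_def)
  show ?thesis
  proof
    assume w: "well_dominated (complete_vertices n \<times> V) (strong_prod_edges (complete_edges n) E)"
    show "well_dominated V E" unfolding well_dominated_def
    proof (intro allI impI)
      fix S assume m: "minimal_dominating V E S"
      have mm: "minimal_dominating (complete_vertices n \<times> V) (strong_prod_edges (complete_edges n) E) ({0} \<times> S)"
        using min_lift[OF n g m] .
      hence mi: "minimum_dominating (complete_vertices n \<times> V) (strong_prod_edges (complete_edges n) E) ({0} \<times> S)"
        using w unfolding well_dominated_def by simp
      have cS: "card ({0::nat} \<times> S) = card S" by (simp add: card_cartesian_product)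
      have "\<forall>S'. dominating V E S' \<longrightarrow> card S \<le> card S'"
      proof (intro allI impI)
        fix S' assume ds: "dominating V E S'"
        have sv: "S' \<subseteq> V" using ds unfolding dominating_def by blast
        have "{0} \<times> S' \<subseteq> complete_vertices n \<times> V" using sv n by (auto simp: complete_vertices_def)
        moreover have "snd ` ({0} \<times> S') = S'" by force
        ultimately have "dominating (complete_vertices n \<times> V) (strong_prod_edges (complete_edges n) E) ({0} \<times> S')"
          using dom_iff[OF n g] ds by simp
        hence "card ({0::nat} \<times> S) \<le> card ({0::nat} \<times> S')" using mi unfolding minimum_dominating_def
          by blast
        thus "card S \<le> card S'" by (simp add: card_cartesian_product)
      qed
      thus "minimum_dominating V E S" using m unfolding minimum_dominating_def minimal_dominating_def by blast
    qed
  next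
    assume w: "well_dominated V E"
    show "well_dominated (complete_vertices n \<times> V) (strong_prod_edges (complete_edges n) E)"
      unfolding well_dominated_def
    proof (intro allI impI)
      fix D assume m: "minimal_dominating (complete_vertices n \<times> V) (strong_prod_edges (complete_edges n) E) D"
      from min_proj[OF n g m] have inj: "inj_on snd D" and ms: "minimal_dominating V E (snd ` D)" by auto
      have mi: "minimum_dominating V E (snd ` D)" using w ms unfolding well_dominated_def by simp
      have cD: "card (snd ` D) = card D" using inj by (simp add: card_image)
      have "\<forall>D'. dominating (complete_vertices n \<times> V) (strong_prod_edges (complete_edges n) E) D' \<longrightarrow> card D \<le> card D'"
      proof (intro allI impI)
        fix D' assume dd: "dominating (complete_vertices n \<times> V) (strong_prod_edges (complete_edges n) E) D'"
        have sub: "D' \<subseteq> complete_vertices n \<times> V" and ds: "dominating V E (snd ` D')"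
          using iffD1[OF dom_iff[OF n g] dd] by blast+
        have "finite D'" using sub fin finite_subset by blast
        hence "card (snd ` D') \<le> card D'" by (rule card_image_le)
        moreover have "card (snd ` D) \<le> card (snd ` D')" using mi ds unfolding minimum_dominating_def by simp
        ultimately show "card D \<le> card D'" using cD by simp
      qed
      thus "minimum_dominating (complete_vertices n \<times> V) (strong_prod_edges (complete_edges n) E) D"
        using m unfolding minimum_dominating_def minimal_dominating_def by blast
    qed
  qed
qed

end
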